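(* Let $d=5$, let $0<\epsilon<\frac35$, and define $\mu(X)=w(|X|)$ for $X\in Q_5$, where $w(0)=\frac1{16}(1-\epsilon)+\frac38\epsilon$, $w(2)=\frac1{16}(1-\epsilon)$, $w(4)=\frac1{16}(1-\epsilon)+\frac18\epsilon$, and $w(1)=w(3)=w(5)=0$. Then $\mu$ is a probability distribution with $w_i^0=\frac12$ for all $i\in[5]$, and $\mu$ has no equilibrium: for every $X\in Q_5$ there is $Y\in Q_5$ with $P_1(X,Y)<\frac12$.
   Context: $Q_d=\{0,1\}^d$ with the Hamming distance $d(X,Y)=|\{i: x_i\neq y_i\}|$; $|X|$ is the number of coordinates equal to $1$. For a probability distribution $\mu$ on $Q_d$ (extended additively to subsets), and $A,B\in Q_d$, let $V(A,B)=\{Z: d(Z,A)<d(Z,B)\}$, $T(A,B)=\{Z: d(Z,A)=d(Z,B)\}$, $P_1(A,B)=\mu(V(A,B))+\frac12\mu(T(A,B))$, $P_2(A,B)=\mu(V(B,A))+\frac12\mu(T(A,B))$. $(A,B)$ is an equilibrium if $P_1(A,B)\ge P_1(A',B)$ for all $A'$ and $P_2(A,B)\ge P_2(A,B')$ for all $B'$. $w_i^0=\mu(\{Z: z_i=0\})$. *)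

theory Defs
  imports Complex_Main
begin
text \<open>Points of Q_d are boolean lists of length d (True = coordinate 1),
coordinate i of the paper corresponds to list index i-1.\<close>

definition cube :: "nat \<Rightarrow> bool list set" where
  "cube d = {xs. length xs = d}"

definition hamming :: "bool list \<Rightarrow> bool list \<Rightarrow> nat" where
  "hamming X Y = card {i. i < length X \<and> X ! i \<noteq> Y ! i}"

definition weight :: "bool list \<Rightarrow> nat" where
  "weight X = card {i. i < length X \<and> X ! i}"

definition meas :: "(bool list \<Rightarrow> real) \<Rightarrow> bool list set \<Rightarrow> real" where
  "meas mu S = (\<Sum>Z\<in>S. mu Z)"

definition is_prob_dist :: "nat \<Rightarrow> (bool list \<Rightarrow> real) \<Rightarrow> bool" where
  "is_prob_dist d mu \<longleftrightarrow> (\<forall>Z\<in>cube d. mu Z \<ge> 0) \<and> meas mu (cube d) = 1"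

definition Vor :: "nat \<Rightarrow> bool list \<Rightarrow> bool list \<Rightarrow> bool list set" where
  "Vor d A B = {Z \<in> cube d. hamming Z A < hamming Z B}"

definition Tie :: "nat \<Rightarrow> bool list \<Rightarrow> bool list \<Rightarrow> bool list set" where
  "Tie d A B = {Z \<in> cube d. hamming Z A = hamming Z B}"

definition P1 :: "nat \<Rightarrow> (bool list \<Rightarrow> real) \<Rightarrow> bool list \<Rightarrow> bool list \<Rightarrow> real" where
  "P1 d mu A B = meas mu (Vor d A B) + 1/2 * meas mu (Tie d A B)"

definition P2 :: "nat \<Rightarrow> (bool list \<Rightarrow> real) \<Rightarrow> bool list \<Rightarrow> bool list \<Rightarrow> real" where
  "P2 d mu A B = meas mu (Vor d B A) + 1/2 * meas mu (Tie d A B)"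

definition equilibrium :: "nat \<Rightarrow> (bool list \<Rightarrow> real) \<Rightarrow> bool list \<Rightarrow> bool list \<Rightarrow> bool" where
  "equilibrium d mu A B \<longleftrightarrow> A \<in> cube d \<and> B \<in> cube d \<and>
     (\<forall>A'\<in>cube d. P1 d mu A B \<ge> P1 d mu A' B) \<and>
     (\<forall>B'\<in>cube d. P2 d mu A B \<ge> P2 d mu A B')"

text \<open>w_i^0 for list index i (paper coordinate i+1).\<close>
definition w0 :: "nat \<Rightarrow> (bool list \<Rightarrow> real) \<Rightarrow> nat \<Rightarrow> real" where
  "w0 d mu i = meas mu {Z \<in> cube d. \<not> Z ! i}"

end

theory Submission
  imports Defs
begin

fun bl :: "nat \<Rightarrow> bool list list" where
  "bl 0 = [[]]"
| "bl (Suc n) = map (Cons False) (bl n) @ map (Cons True) (bl n)"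

lemma set_bl: "set (bl n) = cube n"
proof (induction n)
  case 0 then show ?case by (auto simp: cube_def)
next
  case (Suc n)
  show ?case
  proof
    show "set (bl (Suc n)) \<subseteq> cube (Suc n)" using Suc by (auto simp: cube_def)
    show "cube (Suc n) \<subseteq> set (bl (Suc n))"
    proof
      fix xs assume "xs \<in> cube (Suc n)"
      then obtain b ys where xs: "xs = b # ys" and "ys \<in> cube n"
        by (cases xs) (auto simp: cube_def)
      then show "xs \<in> set (bl (Suc n))" using Suc by (cases b) auto
    qed
  qed
qed

lemma distinct_bl: "distinct (bl n)"
  by (induction n) (auto simp: distinct_map inj_on_def)

lemma finite_cube: "finite (cube n)"
  using set_bl[of n] by (metis finite_set)

lemma card_less_Suc:
  "card {i. i < Suc n \<and> P i} = (if P 0 then 1 else 0) + card {i. i < n \<and> P (Suc i)}"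
proof -
  have e: "{i. i < Suc n \<and> P i} = {i. i = 0 \<and> P 0} \<union> Suc ` {i. i < n \<and> P (Suc i)}"
    by (auto simp: image_iff less_Suc_eq_0_disj)
  have "card ({i. i = 0 \<and> P 0} \<union> Suc ` {i. i < n \<and> P (Suc i)})
        = card {i::nat. i = 0 \<and> P 0} + card (Suc ` {i. i < n \<and> P (Suc i)})"
    by (rule card_Un_disjoint) auto
  also have "card (Suc ` {i. i < n \<and> P (Suc i)}) = card {i. i < n \<and> P (Suc i)}"
    by (rule card_image) auto
  also have "card {i::nat. i = 0 \<and> P 0} = (if P 0 then 1 else 0)" by auto
  finally show ?thesis using e by simp
qed

lemma hamming_Nil: "hamming [] Y = 0" by (simp add: hamming_def)
lemma hamming_Cons: "hamming (x # X) (y # Y) = (if x \<noteq> y then 1 else 0) + hamming X Y"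
  unfolding hamming_def by (simp add: card_less_Suc)
lemma weight_Nil: "weight [] = 0" by (simp add: weight_def)
lemma weight_Cons: "weight (x # X) = (if x then 1 else 0) + weight X"
  unfolding weight_def by (simp add: card_less_Suc)

lemma meas_filter: "meas mu {Z \<in> cube d. P Z} = (\<Sum>Z\<leftarrow>bl d. if P Z then mu Z else 0)"
  unfolding meas_def
  by (simp add: sum.inter_filter finite_cube sum_list_distinct_conv_sum_set distinct_bl set_bl)

lemma meas_cube: "meas mu (cube d) = (\<Sum>Z\<leftarrow>bl d. mu Z)"
  unfolding meas_def by (simp add: sum_list_distinct_conv_sum_set distinct_bl set_bl)

lemma P1_sum: "P1 d mu A B = (\<Sum>Z\<leftarrow>bl d. (if hamming Z A < hamming Z B then mu Z else 0)
    + 1/2 * (if hamming Z A = hamming Z B then mu Z else 0))"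
  unfolding P1_def Vor_def Tie_def meas_filter sum_list_addf sum_list_const_mult by (rule refl)

lemma P2_sum: "P2 d mu A B = (\<Sum>Z\<leftarrow>bl d. (if hamming Z B < hamming Z A then mu Z else 0)
    + 1/2 * (if hamming Z A = hamming Z B then mu Z else 0))"
  unfolding P2_def Vor_def Tie_def meas_filter sum_list_addf sum_list_const_mult by (rule refl)

lemma P1_P2: "P1 d mu A B + P2 d mu A B = meas mu (cube d)"
proof -
  have "P1 d mu A B + P2 d mu A B = (\<Sum>Z\<leftarrow>bl d. mu Z)"
    unfolding P1_sum P2_sum sum_list_addf[symmetric]
    by (rule arg_cong[where f=sum_list], rule map_cong) auto
  then show ?thesis by (simp add: meas_cube)
qed

lemma P1_self: "P1 d mu A A = 1/2 * meas mu (cube d)"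
  unfolding P1_sum meas_cube by (simp add: sum_list_const_mult[symmetric] del: sum_list_const_mult)

lemmas bl_simps = eval_nat_numeral hamming_Nil hamming_Cons weight_Nil weight_Cons

context
  fixes \<epsilon> :: real and w :: "nat \<Rightarrow> real" and mu :: "bool list \<Rightarrow> real"
  assumes eps: "0 < \<epsilon>" "\<epsilon> < 3/5"
  assumes w_def: "w = (\<lambda>k. if k = 0 then (1/16) * (1 - \<epsilon>) + (3/8) * \<epsilon>
                  else if k = 2 then (1/16) * (1 - \<epsilon>)
                  else if k = 4 then (1/16) * (1 - \<epsilon>) + (1/8) * \<epsilon>
                  else 0)"
  assumes mu_def: "mu = (\<lambda>X. w (weight X))"
begin

lemma wit0: "\<exists>Y\<in>cube 5. P1 5 mu [False,False,False,False,False] Y < 1/2"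
proof (rule bexI[of _ "[False,False,True,True,True]"])
  show "P1 5 mu [False,False,False,False,False] [False,False,True,True,True] < 1/2"
    unfolding P1_sum mu_def w_def using eps by (simp add: bl_simps; simp add: field_simps)
qed (simp add: cube_def)

lemma wit1: "\<exists>Y\<in>cube 5. P1 5 mu [False,False,False,False,True] Y < 1/2"
proof (rule bexI[of _ "[False,True,True,True,True]"])
  show "P1 5 mu [False,False,False,False,True] [False,True,True,True,True] < 1/2"
    unfolding P1_sum mu_def w_def using eps by (simp add: bl_simps; simp add: field_simps)
qed (simp add: cube_def)

lemma wit2: "\<exists>Y\<in>cube 5. P1 5 mu [False,False,False,True,False] Y < 1/2"
proof (rule bexI[of _ "[False,True,True,True,True]"])
  show "P1 5 mu [False,False,False,True,False] [False,True,True,True,True] < 1/2"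
    unfolding P1_sum mu_def w_def using eps by (simp add: bl_simps; simp add: field_simps)
qed (simp add: cube_def)

lemma wit3: "\<exists>Y\<in>cube 5. P1 5 mu [False,False,False,True,True] Y < 1/2"
proof (rule bexI[of _ "[False,False,True,False,False]"])
  show "P1 5 mu [False,False,False,True,True] [False,False,True,False,False] < 1/2"
    unfolding P1_sum mu_def w_def using eps by (simp add: bl_simps; simp add: field_simps)
qed (simp add: cube_def)

lemma wit4: "\<exists>Y\<in>cube 5. P1 5 mu [False,False,True,False,False] Y < 1/2"
proof (rule bexI[of _ "[False,True,True,True,True]"])
  show "P1 5 mu [False,False,True,False,False] [False,True,True,True,True] < 1/2"
    unfolding P1_sum mu_def w_def using eps by (simp add: bl_simps; simp add: field_simps)
qed (simp add: cube_def)

lemma wit5: "\<exists>Y\<in>cube 5. P1 5 mu [False,False,True,False,True] Y < 1/2"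
proof (rule bexI[of _ "[False,False,False,True,False]"])
  show "P1 5 mu [False,False,True,False,True] [False,False,False,True,False] < 1/2"
    unfolding P1_sum mu_def w_def using eps by (simp add: bl_simps; simp add: field_simps)
qed (simp add: cube_def)

lemma wit6: "\<exists>Y\<in>cube 5. P1 5 mu [False,False,True,True,False] Y < 1/2"
proof (rule bexI[of _ "[False,False,False,False,True]"])
  show "P1 5 mu [False,False,True,True,False] [False,False,False,False,True] < 1/2"
    unfolding P1_sum mu_def w_def using eps by (simp add: bl_simps; simp add: field_simps)
qed (simp add: cube_def)

lemma wit7: "\<exists>Y\<in>cube 5. P1 5 mu [False,False,True,True,True] Y < 1/2"
proof (rule bexI[of _ "[False,True,False,False,False]"])
  show "P1 5 mu [False,False,True,True,True] [False,True,False,False,False] < 1/2"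
    unfolding P1_sum mu_def w_def using eps by (simp add: bl_simps; simp add: field_simps)
qed (simp add: cube_def)

lemma wit8: "\<exists>Y\<in>cube 5. P1 5 mu [False,True,False,False,False] Y < 1/2"
proof (rule bexI[of _ "[False,True,True,True,True]"])
  show "P1 5 mu [False,True,False,False,False] [False,True,True,True,True] < 1/2"
    unfolding P1_sum mu_def w_def using eps by (simp add: bl_simps; simp add: field_simps)
qed (simp add: cube_def)

lemma wit9: "\<exists>Y\<in>cube 5. P1 5 mu [False,True,False,False,True] Y < 1/2"
proof (rule bexI[of _ "[False,False,False,True,False]"])
  show "P1 5 mu [False,True,False,False,True] [False,False,False,True,False] < 1/2"
    unfolding P1_sum mu_def w_def using eps by (simp add: bl_simps; simp add: field_simps)
qed (simp add: cube_def)

lemma wit10: "\<exists>Y\<in>cube 5. P1 5 mu [False,True,False,True,False] Y < 1/2"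
proof (rule bexI[of _ "[False,False,False,False,True]"])
  show "P1 5 mu [False,True,False,True,False] [False,False,False,False,True] < 1/2"
    unfolding P1_sum mu_def w_def using eps by (simp add: bl_simps; simp add: field_simps)
qed (simp add: cube_def)

lemma wit11: "\<exists>Y\<in>cube 5. P1 5 mu [False,True,False,True,True] Y < 1/2"
proof (rule bexI[of _ "[False,False,True,False,False]"])
  show "P1 5 mu [False,True,False,True,True] [False,False,True,False,False] < 1/2"
    unfolding P1_sum mu_def w_def using eps by (simp add: bl_simps; simp add: field_simps)
qed (simp add: cube_def)

lemma wit12: "\<exists>Y\<in>cube 5. P1 5 mu [False,True,True,False,False] Y < 1/2"
proof (rule bexI[of _ "[False,False,False,False,True]"])
  show "P1 5 mu [False,True,True,False,False] [False,False,False,False,True] < 1/2"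
    unfolding P1_sum mu_def w_def using eps by (simp add: bl_simps; simp add: field_simps)
qed (simp add: cube_def)

lemma wit13: "\<exists>Y\<in>cube 5. P1 5 mu [False,True,True,False,True] Y < 1/2"
proof (rule bexI[of _ "[False,False,False,True,False]"])
  show "P1 5 mu [False,True,True,False,True] [False,False,False,True,False] < 1/2"
    unfolding P1_sum mu_def w_def using eps by (simp add: bl_simps; simp add: field_simps)
qed (simp add: cube_def)

lemma wit14: "\<exists>Y\<in>cube 5. P1 5 mu [False,True,True,True,False] Y < 1/2"
proof (rule bexI[of _ "[False,False,False,False,True]"])
  show "P1 5 mu [False,True,True,True,False] [False,False,False,False,True] < 1/2"
    unfolding P1_sum mu_def w_def using eps by (simp add: bl_simps; simp add: field_simps)
qed (simp add: cube_def)

lemma wit15: "\<exists>Y\<in>cube 5. P1 5 mu [False,True,True,True,True] Y < 1/2"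
proof (rule bexI[of _ "[True,False,False,False,True]"])
  show "P1 5 mu [False,True,True,True,True] [True,False,False,False,True] < 1/2"
    unfolding P1_sum mu_def w_def using eps by (simp add: bl_simps; simp add: field_simps)
qed (simp add: cube_def)

lemma wit16: "\<exists>Y\<in>cube 5. P1 5 mu [True,False,False,False,False] Y < 1/2"
proof (rule bexI[of _ "[False,True,True,True,True]"])
  show "P1 5 mu [True,False,False,False,False] [False,True,True,True,True] < 1/2"
    unfolding P1_sum mu_def w_def using eps by (simp add: bl_simps; simp add: field_simps)
qed (simp add: cube_def)

lemma wit17: "\<exists>Y\<in>cube 5. P1 5 mu [True,False,False,False,True] Y < 1/2"
proof (rule bexI[of _ "[False,False,False,True,False]"])
  show "P1 5 mu [True,False,False,False,True] [False,False,False,True,False] < 1/2"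
    unfolding P1_sum mu_def w_def using eps by (simp add: bl_simps; simp add: field_simps)
qed (simp add: cube_def)

lemma wit18: "\<exists>Y\<in>cube 5. P1 5 mu [True,False,False,True,False] Y < 1/2"
proof (rule bexI[of _ "[False,False,False,False,True]"])
  show "P1 5 mu [True,False,False,True,False] [False,False,False,False,True] < 1/2"
    unfolding P1_sum mu_def w_def using eps by (simp add: bl_simps; simp add: field_simps)
qed (simp add: cube_def)

lemma wit19: "\<exists>Y\<in>cube 5. P1 5 mu [True,False,False,True,True] Y < 1/2"
proof (rule bexI[of _ "[False,False,True,False,False]"])
  show "P1 5 mu [True,False,False,True,True] [False,False,True,False,False] < 1/2"
    unfolding P1_sum mu_def w_def using eps by (simp add: bl_simps; simp add: field_simps)
qed (simp add: cube_def)

lemma wit20: "\<exists>Y\<in>cube 5. P1 5 mu [True,False,True,False,False] Y < 1/2"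
proof (rule bexI[of _ "[False,False,False,False,True]"])
  show "P1 5 mu [True,False,True,False,False] [False,False,False,False,True] < 1/2"
    unfolding P1_sum mu_def w_def using eps by (simp add: bl_simps; simp add: field_simps)
qed (simp add: cube_def)

lemma wit21: "\<exists>Y\<in>cube 5. P1 5 mu [True,False,True,False,True] Y < 1/2"
proof (rule bexI[of _ "[False,False,False,True,False]"])
  show "P1 5 mu [True,False,True,False,True] [False,False,False,True,False] < 1/2"
    unfolding P1_sum mu_def w_def using eps by (simp add: bl_simps; simp add: field_simps)
qed (simp add: cube_def)

lemma wit22: "\<exists>Y\<in>cube 5. P1 5 mu [True,False,True,True,False] Y < 1/2"
proof (rule bexI[of _ "[False,False,False,False,True]"])
  show "P1 5 mu [True,False,True,True,False] [False,False,False,False,True] < 1/2"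
    unfolding P1_sum mu_def w_def using eps by (simp add: bl_simps; simp add: field_simps)
qed (simp add: cube_def)

lemma wit23: "\<exists>Y\<in>cube 5. P1 5 mu [True,False,True,True,True] Y < 1/2"
proof (rule bexI[of _ "[False,True,False,False,True]"])
  show "P1 5 mu [True,False,True,True,True] [False,True,False,False,True] < 1/2"
    unfolding P1_sum mu_def w_def using eps by (simp add: bl_simps; simp add: field_simps)
qed (simp add: cube_def)

lemma wit24: "\<exists>Y\<in>cube 5. P1 5 mu [True,True,False,False,False] Y < 1/2"
proof (rule bexI[of _ "[False,False,False,False,True]"])
  show "P1 5 mu [True,True,False,False,False] [False,False,False,False,True] < 1/2"
    unfolding P1_sum mu_def w_def using eps by (simp add: bl_simps; simp add: field_simps)
qed (simp add: cube_def)

lemma wit25: "\<exists>Y\<in>cube 5. P1 5 mu [True,True,False,False,True] Y < 1/2"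
proof (rule bexI[of _ "[False,False,False,True,False]"])
  show "P1 5 mu [True,True,False,False,True] [False,False,False,True,False] < 1/2"
    unfolding P1_sum mu_def w_def using eps by (simp add: bl_simps; simp add: field_simps)
qed (simp add: cube_def)

lemma wit26: "\<exists>Y\<in>cube 5. P1 5 mu [True,True,False,True,False] Y < 1/2"
proof (rule bexI[of _ "[False,False,False,False,True]"])
  show "P1 5 mu [True,True,False,True,False] [False,False,False,False,True] < 1/2"
    unfolding P1_sum mu_def w_def using eps by (simp add: bl_simps; simp add: field_simps)
qed (simp add: cube_def)

lemma wit27: "\<exists>Y\<in>cube 5. P1 5 mu [True,True,False,True,True] Y < 1/2"
proof (rule bexI[of _ "[False,False,True,False,True]"])
  show "P1 5 mu [True,True,False,True,True] [False,False,True,False,True] < 1/2"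
    unfolding P1_sum mu_def w_def using eps by (simp add: bl_simps; simp add: field_simps)
qed (simp add: cube_def)

lemma wit28: "\<exists>Y\<in>cube 5. P1 5 mu [True,True,True,False,False] Y < 1/2"
proof (rule bexI[of _ "[False,False,False,False,True]"])
  show "P1 5 mu [True,True,True,False,False] [False,False,False,False,True] < 1/2"
    unfolding P1_sum mu_def w_def using eps by (simp add: bl_simps; simp add: field_simps)
qed (simp add: cube_def)

lemma wit29: "\<exists>Y\<in>cube 5. P1 5 mu [True,True,True,False,True] Y < 1/2"
proof (rule bexI[of _ "[False,False,False,True,True]"])
  show "P1 5 mu [True,True,True,False,True] [False,False,False,True,True] < 1/2"
    unfolding P1_sum mu_def w_def using eps by (simp add: bl_simps; simp add: field_simps)
qed (simp add: cube_def)

lemma wit30: "\<exists>Y\<in>cube 5. P1 5 mu [True,True,True,True,False] Y < 1/2"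
proof (rule bexI[of _ "[False,False,False,True,True]"])
  show "P1 5 mu [True,True,True,True,False] [False,False,False,True,True] < 1/2"
    unfolding P1_sum mu_def w_def using eps by (simp add: bl_simps; simp add: field_simps)
qed (simp add: cube_def)

lemma wit31: "\<exists>Y\<in>cube 5. P1 5 mu [True,True,True,True,True] Y < 1/2"
proof (rule bexI[of _ "[False,False,False,False,False]"])
  show "P1 5 mu [True,True,True,True,True] [False,False,False,False,False] < 1/2"
    unfolding P1_sum mu_def w_def using eps by (simp add: bl_simps; simp add: field_simps)
qed (simp add: cube_def)

lemma wit_all: assumes "X \<in> cube 5" shows "\<exists>Y\<in>cube 5. P1 5 mu X Y < 1/2"
proof -
  have "X \<in> set (bl 5)" using assms set_bl by auto
  then have "X = [False,False,False,False,False] \<or> X = [False,False,False,False,True] \<or> X = [False,False,False,True,False] \<or> X = [False,False,False,True,True] \<or> X = [False,False,True,False,False] \<or> X = [False,False,True,False,True] \<or> X = [False,False,True,True,False] \<or> X = [False,False,True,True,True] \<or> X = [False,True,False,False,False] \<or> X = [False,True,False,False,True] \<or> X = [False,True,False,True,False] \<or> X = [False,True,False,True,True] \<or> X = [False,True,True,False,False] \<or> X = [False,True,True,False,True] \<or> X = [False,True,True,True,False] \<or> X = [False,True,True,True,True] \<or> X = [True,False,False,False,False] \<or> X = [True,False,False,False,True] \<or> X = [True,False,False,True,False] \<or> X = [True,False,False,True,True] \<or> X = [True,False,True,False,False] \<or> X = [True,False,True,False,True] \<or> X = [True,False,True,True,False] \<or> X = [True,False,True,True,True] \<or> X = [True,True,False,False,False]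 \<or> X = [True,True,False,False,True] \<or> X = [True,True,False,True,False] \<or> X = [True,True,False,True,True] \<or> X = [True,True,True,False,False] \<or> X = [True,True,True,False,True] \<or> X = [True,True,True,True,False] \<or> X = [True,True,True,True,True]"
    by (simp add: eval_nat_numeral)
  then show ?thesis by (elim disjE) (simp_all only: wit0 wit1 wit2 wit3 wit4 wit5 wit6 wit7 wit8 wit9 wit10 wit11 wit12 wit13 wit14 wit15 wit16 wit17 wit18 wit19 wit20 wit21 wit22 wit23 wit24 wit25 wit26 wit27 wit28 wit29 wit30 wit31)
qed
lemma prob: "is_prob_dist 5 mu"
  unfolding is_prob_dist_def
proof
  show "\<forall>Z\<in>cube 5. mu Z \<ge> 0" unfolding mu_def w_def using eps by auto
  show "meas mu (cube 5) = 1" unfolding meas_cube mu_def w_def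
    by (simp add: bl_simps; simp add: field_simps)
qed

lemma meas1: "meas mu (cube 5) = 1" using prob by (simp add: is_prob_dist_def)

lemma w0s: assumes "i < 5" shows "w0 5 mu i = 1/2"
proof -
  have "i = 0 \<or> i = 1 \<or> i = 2 \<or> i = 3 \<or> i = 4" using assms by auto
  then show ?thesis unfolding w0_def meas_filter mu_def w_def
    by (elim disjE) (simp add: bl_simps; simp add: field_simps)+
qed

lemma noeq: "\<not> (\<exists>A B. equilibrium 5 mu A B)"
proof
  assume "\<exists>A B. equilibrium 5 mu A B"
  then obtain A B where e: "equilibrium 5 mu A B" by blast
  then have A: "A \<in> cube 5" and B: "B \<in> cube 5"
    and h1: "\<forall>A'\<in>cube 5. P1 5 mu A B \<ge> P1 5 mu A' B"
    and h2: "\<forall>B'\<in>cube 5. P2 5 mu A B \<ge> P2 5 mu A B'"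
    unfolding equilibrium_def by auto
  obtain Y where Y: "Y \<in> cube 5" "P1 5 mu A Y < 1/2" using wit_all[OF A] by blast
  have "P1 5 mu A B \<ge> P1 5 mu B B" using h1 B by blast
  moreover have "P1 5 mu B B = 1/2" using P1_self meas1 by simp
  moreover have "P2 5 mu A B \<ge> P2 5 mu A Y" using h2 Y by blast
  moreover have "P1 5 mu A B + P2 5 mu A B = 1" using P1_P2 meas1 by simp
  moreover have "P1 5 mu A Y + P2 5 mu A Y = 1" using P1_P2 meas1 by simp
  ultimately show False using Y by linarith
qed

end

theorem mainTheorem9:
  fixes \<epsilon> :: real and w :: "nat \<Rightarrow> real" and mu :: "bool list \<Rightarrow> real"
  assumes "0 < \<epsilon>" and "\<epsilon> < 3/5"
  defines "w \<equiv> (\<lambda>k. if k = 0 then (1/16) * (1 - \<epsilon>) + (3/8) * \<epsilon>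
                  else if k = 2 then (1/16) * (1 - \<epsilon>)
                  else if k = 4 then (1/16) * (1 - \<epsilon>) + (1/8) * \<epsilon>
                  else 0)"
  defines "mu \<equiv> (\<lambda>X. w (weight X))"
  shows "is_prob_dist 5 mu \<and> (\<forall>i<5. w0 5 mu i = 1/2)
         \<and> \<not> (\<exists>A B. equilibrium 5 mu A B)
         \<and> (\<forall>X\<in>cube 5. \<exists>Y\<in>cube 5. P1 5 mu X Y < 1/2)"
proof -
  have W: "w = (\<lambda>k. if k = 0 then (1/16) * (1 - \<epsilon>) + (3/8) * \<epsilon>
                  else if k = 2 then (1/16) * (1 - \<epsilon>)
                  else if k = 4 then (1/16) * (1 - \<epsilon>) + (1/8) * \<epsilon>
                  else 0)" by (simp add: w_def)
  have M: "mu = (\<lambda>X. w (weight X))" by (simp add: mu_def)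
  note c = assms(1,2) W M
  show ?thesis
    using prob[OF c] w0s[OF c] noeq[OF c] wit_all[OF c] by blast
qed

end
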